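(* Let $f: \mathbb{R}^n \to \mathbb{R}^n$ be topical. Then $$\inf \Lambda(f) = \inf_{x\in\mathbb{R}^n} \max_{1\le i\le n} (f_i(x) - x_i) = \overline{\chi}(f).$$
   Context: $f$ is topical if $f(x+h) = f(x)+h$ for all $h\in\mathbb{R}$ (scalar added to each coordinate) and $x\le y$ componentwise implies $f(x)\le f(y)$. $S^\lambda(f) = \{x : f(x) \le \lambda + x\}$ and $\Lambda(f) = \{\lambda\in\mathbb{R} : S^\lambda(f)\ne\emptyset\}$. The upper cycle time is $\overline{\chi}(f) = \lim_{k\to\infty} \max_i f^k_i(x)/k$, a limit that exists and is independent of $x \in \mathbb{R}^n$. *)

theory Defs
  imports "HOL-Analysis.Analysis"
begin

definition topical :: "(real^'n \<Rightarrow> real^'n) \<Rightarrow> bool" where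
  "topical f \<longleftrightarrow>
     (\<forall>x h. f (x + (\<chi> i. h)) = f x + (\<chi> i. h)) \<and>
     (\<forall>x y. (\<forall>i. x $ i \<le> y $ i) \<longrightarrow> (\<forall>i. f x $ i \<le> f y $ i))"

definition sublevel :: "(real^'n \<Rightarrow> real^'n) \<Rightarrow> real \<Rightarrow> (real^'n) set" where
  "sublevel f lam = {x. \<forall>i. f x $ i \<le> lam + x $ i}"

definition Lambda_set :: "(real^'n \<Rightarrow> real^'n) \<Rightarrow> real set" where
  "Lambda_set f = {lam. sublevel f lam \<noteq> {}}"

text \<open>Upper cycle time, computed from the starting point x (the limit exists
  and is independent of x).\<close>
definition upper_cycle_time :: "(real^'n \<Rightarrow> real^'n) \<Rightarrow> real^'n \<Rightarrow> real" where
  "upper_cycle_time f x = lim (\<lambda>k. Max (range (\<lambda>i. (f ^^ k) x $ i)) / real k)"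

end

theory Submission
  imports Defs
begin

lemma top_mono:
  assumes "topical f" "\<forall>i. x$i \<le> y$i"
  shows "f x $ i \<le> f y $ i"
  using assms unfolding topical_def by blast

lemma top_add:
  assumes "topical f"
  shows "f (x + (\<chi> i. h)) $ i = f x $ i + h"
  using assms unfolding topical_def by simp

lemma top_shift_le:
  assumes "topical f" "\<forall>i. x$i \<le> y$i + h"
  shows "f x $ i \<le> f y $ i + h"
proof -
  have "f x $ i \<le> f (y + (\<chi> i. h)) $ i"
    using assms by (intro top_mono) auto
  also have "\<dots> = f y $ i + h" using top_add[OF assms(1)] .
  finally show ?thesis .
qed

lemma top_pow:
  assumes "topical f"
  shows "topical (f ^^ k)"
proof (induction k)
  case 0
  then show ?case by (simp add: topical_def)
next
  case (Suc k)
  then show ?case using assms unfolding topical_def by auto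
qed

lemma fin_range: "finite (range (\<lambda>i::'n::finite. g i))"
  by simp

lemma max_ge: "(g::'n::finite \<Rightarrow> real) i \<le> Max (range g)"
  by (rule Max_ge) auto

lemma max_le_iff: "Max (range (g::'n::finite \<Rightarrow> real)) \<le> c \<longleftrightarrow> (\<forall>i. g i \<le> c)"
  by (subst Max_le_iff) auto

lemma min_le: "Min (range (g::'n::finite \<Rightarrow> real)) \<le> g i"
  by (rule Min_le) auto

lemma sub_from_iter:
  fixes f :: "real^'n \<Rightarrow> real^'n"
  assumes tf: "topical f" and N: "N > 0"
    and hz: "\<forall>i. (f^^N) z $ i \<le> z $ i + real N * lam"
  shows "\<exists>x. \<forall>i. f x $ i \<le> lam + x $ i"
proof -
  define x where "x = (\<chi> i. Min ((\<lambda>j. (f^^j) z $ i - real j * lam) ` {..<N}))"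
  have xle: "x $ i \<le> (f^^j) z $ i - real j * lam" if "j < N" for i j
    unfolding x_def using that by (auto intro!: Min_le)
  have fx: "f x $ i \<le> (f^^Suc j) z $ i - real j * lam" if "j < N" for i j
  proof -
    have "f x $ i \<le> f ((f^^j) z) $ i + (- real j * lam)"
      using xle[OF that] by (intro top_shift_le[OF tf]) auto
    then show ?thesis by simp
  qed
  have "f x $ i \<le> lam + x $ i" for i
  proof -
    have xi: "x $ i = Min ((\<lambda>j. (f^^j) z $ i - real j * lam) ` {..<N})"
      unfolding x_def by simp
    have "f x $ i - lam \<le> x $ i"
      unfolding xi
    proof (rule Min.boundedI)
      show "finite ((\<lambda>j. (f ^^ j) z $ i - real j * lam) ` {..<N})" by simp
      show "(\<lambda>j. (f ^^ j) z $ i - real j * lam) ` {..<N} \<noteq> {}" using N by auto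
      fix a assume "a \<in> (\<lambda>j. (f ^^ j) z $ i - real j * lam) ` {..<N}"
      then obtain j where j: "j < N" "a = (f ^^ j) z $ i - real j * lam" by auto
      show "f x $ i - lam \<le> a"
      proof (cases j)
        case 0
        have "N - 1 < N" using N by simp
        from fx[OF this, of i] have "f x $ i \<le> (f^^N) z $ i - real (N - 1) * lam"
          using N by simp
        moreover have "real (N - 1) = real N - 1" using N by simp
        ultimately show ?thesis using hz[rule_format, of i] j 0
          by (simp add: algebra_simps)
      next
        case (Suc j')
        then have "j' < N" using j by simp
        from fx[OF this, of i] show ?thesis using j Suc by (simp add: algebra_simps)
      qed
    qed
    then show ?thesis by simp
  qed
  then show ?thesis by blast
qed

theorem proposition2p3:
  fixes f :: "real^'n \<Rightarrow> real^'n"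
  assumes "topical f"
  shows "Inf (Lambda_set f) = (INF x. Max (range (\<lambda>i. f x $ i - x $ i)))
       \<and> (\<forall>x. (INF y. Max (range (\<lambda>i. f y $ i - y $ i))) = upper_cycle_time f x)"
proof -
  note tf = assms
  define M where "M = (\<lambda>x. Max (range (\<lambda>i. f x $ i - x $ i)))"
  define L where "L = Min (range (\<lambda>i. f 0 $ i))"
  define mu where "mu = Inf (range M)"
  have M_le_iff: "M x \<le> c \<longleftrightarrow> (\<forall>i. f x $ i \<le> c + x $ i)" for x c
    unfolding M_def max_le_iff by (auto simp: algebra_simps)
  have M_lower: "L \<le> M x" for x
  proof -
    have "Min (range (\<lambda>i. x $ i)) \<in> range (\<lambda>i. x $ i)" by (rule Min_in) auto
    then obtain j where j: "x $ j = Min (range (\<lambda>i. x $ i))" by (metis imageE)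
    have "\<forall>i. (0::real^'n) $ i \<le> x $ i + (- x $ j)"
    proof
      fix i
      have "x $ j \<le> x $ i" using min_le[of "\<lambda>i. x $ i" i] unfolding j[symmetric] .
      then show "(0::real^'n) $ i \<le> x $ i + (- x $ j)" by simp
    qed
    then have "f 0 $ j \<le> f x $ j + (- x $ j)"
      by (intro top_shift_le[OF tf])
    then have "f 0 $ j \<le> f x $ j - x $ j" by simp
    moreover have "L \<le> f 0 $ j" unfolding L_def by (rule min_le)
    moreover have "f x $ j - x $ j \<le> M x" unfolding M_def by (rule max_ge)
    ultimately show ?thesis by linarith
  qed
  have bdd: "bdd_below (range M)" using M_lower by (intro bdd_belowI[where m=L]) auto
  have mu_le: "mu \<le> M x" for x unfolding mu_def by (rule cInf_lower[OF _ bdd]) simp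
  have Lam: "Lambda_set f = {c. \<exists>x. M x \<le> c}"
    unfolding Lambda_set_def sublevel_def M_le_iff by auto
  have part1: "Inf (Lambda_set f) = mu"
  proof (rule antisym)
    have memL: "c \<in> Lambda_set f \<longleftrightarrow> (\<exists>x. M x \<le> c)" for c unfolding Lam by simp
    have bddL: "bdd_below (Lambda_set f)"
    proof (rule bdd_belowI[where m=L])
      fix c assume "c \<in> Lambda_set f"
      then obtain x where "M x \<le> c" using memL by blast
      then show "L \<le> c" using M_lower[of x] by linarith
    qed
    show "Inf (Lambda_set f) \<le> mu" unfolding mu_def
    proof (rule cInf_greatest)
      show "range M \<noteq> {}" by simp
      fix m assume "m \<in> range M"
      then obtain x where x: "m = M x" by blast
      have "M x \<in> Lambda_set f" using memL by blast
      then show "Inf (Lambda_set f) \<le> m" unfolding x by (rule cInf_lower[OF _ bddL])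
    qed
    show "mu \<le> Inf (Lambda_set f)"
    proof (rule cInf_greatest)
      show "Lambda_set f \<noteq> {}" using memL by blast
      fix c assume "c \<in> Lambda_set f"
      then obtain x where "M x \<le> c" using memL by blast
      then show "mu \<le> c" using mu_le[of x] by linarith
    qed
  qed
  have part2: "upper_cycle_time f x = mu" for x
  proof -
    define T where "T = (\<lambda>k. Max (range (\<lambda>i. (f ^^ k) x $ i)))"
    have "(\<lambda>k. T k / real k) \<longlonglongrightarrow> mu"
    proof (rule LIMSEQ_I)
      fix r :: real assume r: "0 < r"
      have "Inf (range M) < mu + r/2" using r mu_def by simp
      then obtain y where y: "M y < mu + r/2"
        by (subst (asm) cInf_less_iff[OF _ bdd]) auto
      define lam where "lam = M y"
      have fy: "f y $ i \<le> lam + y $ i" for i using M_le_iff lam_def by auto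
      have iter: "(f^^k) y $ i \<le> y $ i + real k * lam" for k i
      proof (induction k arbitrary: i)
        case 0 then show ?case by simp
      next
        case (Suc k)
        have "f ((f^^k) y) $ i \<le> f y $ i + real k * lam"
          using Suc by (intro top_shift_le[OF tf]) auto
        then show ?case using fy[of i] by (simp add: algebra_simps)
      qed
      define D where "D = Max (range (\<lambda>i. x $ i - y $ i))"
      define Ty where "Ty = Max (range (\<lambda>i. y $ i))"
      define C where "C = Ty + D"
      have Tup: "T k \<le> C + real k * lam" for k
        unfolding T_def max_le_iff
      proof
        fix i
        have "(f^^k) x $ i \<le> (f^^k) y $ i + D"
          using max_ge[of "\<lambda>i. x $ i - y $ i"] unfolding D_def
          by (intro top_shift_le[OF top_pow[OF tf]]) (auto simp: algebra_simps)
        moreover have "y $ i \<le> Ty" unfolding Ty_def by (rule max_ge)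
        ultimately show "(f^^k) x $ i \<le> C + real k * lam"
          using iter[of k i] unfolding C_def by linarith
      qed
      define lam2 where "lam2 = mu - r/2"
      define Tm where "Tm = Min (range (\<lambda>i. x $ i))"
      have Tlow: "T k > Tm + real k * lam2" if k: "k > 0" for k
      proof -
        have "\<not> (\<forall>i. (f^^k) x $ i \<le> x $ i + real k * lam2)"
        proof
          assume "\<forall>i. (f^^k) x $ i \<le> x $ i + real k * lam2"
          from sub_from_iter[OF tf k this] obtain z where "\<forall>i. f z $ i \<le> lam2 + z $ i" by blast
          then have "M z \<le> lam2" using M_le_iff by auto
          with mu_le[of z] r show False unfolding lam2_def by simp
        qed
        then obtain i where i: "(f^^k) x $ i > x $ i + real k * lam2" by (meson not_le)
        have "Tm \<le> x $ i" unfolding Tm_def by (rule min_le)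
        moreover have "(f^^k) x $ i \<le> T k" unfolding T_def by (rule max_ge)
        ultimately show ?thesis using i by linarith
      qed
      obtain n0 :: nat where n0: "(\<bar>C\<bar> + \<bar>Tm\<bar>) / (r/2) < real n0"
        using reals_Archimedean2 by blast
      show "\<exists>no. \<forall>n\<ge>no. norm (T n / real n - mu) < r"
      proof (intro exI allI impI)
        fix n assume n: "Suc n0 \<le> n"
        then have npos: "real n > 0" by simp
        have "(\<bar>C\<bar> + \<bar>Tm\<bar>) < real n * (r/2)"
        proof -
          have "(\<bar>C\<bar> + \<bar>Tm\<bar>) < real n0 * (r/2)" using n0 r by (simp add: pos_divide_less_eq)
          moreover have "real n0 * (r/2) \<le> real n * (r/2)" using n r by (intro mult_right_mono) auto
          ultimately show ?thesis by linarith
        qed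
        then have hC: "\<bar>C\<bar> < real n * (r/2)" and hT: "\<bar>Tm\<bar> < real n * (r/2)" by auto
        have "T n \<le> C + real n * lam" by (rule Tup)
        also have "\<dots> < real n * (mu + r)"
        proof -
          have "real n * lam < real n * (mu + r/2)" using y lam_def npos by (intro mult_strict_left_mono) auto
          moreover have "real n * (mu + r) = real n * (mu + r/2) + real n * (r/2)" by (simp add: algebra_simps)
          ultimately show ?thesis using hC by linarith
        qed
        finally have u: "T n / real n < mu + r" using npos by (simp add: divide_less_eq mult.commute)
        have "real n * (mu - r) < Tm + real n * lam2" using hT unfolding lam2_def
          by (simp add: algebra_simps)
        also have "\<dots> < T n" using Tlow[of n] npos by simp
        finally have l: "mu - r < T n / real n" using npos by (simp add: less_divide_eq mult.commute)
        show "norm (T n / real n - mu) < r" using u l by simp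
      qed
    qed
    then show ?thesis unfolding upper_cycle_time_def T_def by (rule limI)
  qed
  show ?thesis using part1 part2 unfolding mu_def M_def by simp
qed

end
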